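(* Let $C=w-w-\dots-w$ be a chain with $m\ge 2$ edges all having the same weight $w>0$. Then $C$ is extremal, i.e. $L_1(C)=L_\emptyset(C)$.
   Context: For a chain $C'=v_1-\dots-v_r$ with $r\ge 2$ edges and positive weights: $L_1(C')=\max\{\sum_{i=1}^r v_ix_i : x\in\mathbb{R}^r,\ x_i^2+x_{i+1}^2\le 1\ \forall\,1\le i\le r-1\}$; the bare length is $L_\emptyset(C')=\sqrt{(\sum_{i\text{ odd}}v_i)^2+(\sum_{i\text{ even}}v_i)^2}$; $C'$ is extremal if $L_1(C')=L_\emptyset(C')$. *)

theory Defs
  imports Complex_Main
begin

text \<open>A chain v_1 - ... - v_r is represented by its weight function v :: nat => real
  (only the values v 1, ..., v r matter) together with r.\<close>

definition L1 :: "(nat \<Rightarrow> real) \<Rightarrow> nat \<Rightarrow> real" where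
  "L1 v r = Sup {(\<Sum>i=1..r. v i * x i) | x :: nat \<Rightarrow> real.
                   \<forall>i. 1 \<le> i \<and> i \<le> r - 1 \<longrightarrow> (x i)\<^sup>2 + (x (i+1))\<^sup>2 \<le> 1}"

definition L_bare :: "(nat \<Rightarrow> real) \<Rightarrow> nat \<Rightarrow> real" where
  "L_bare v r = sqrt ((\<Sum>i\<in>{i\<in>{1..r}. odd i}. v i)\<^sup>2 + (\<Sum>i\<in>{i\<in>{1..r}. even i}. v i)\<^sup>2)"

definition extremal :: "(nat \<Rightarrow> real) \<Rightarrow> nat \<Rightarrow> bool" where
  "extremal v r \<longleftrightarrow> L1 v r = L_bare v r"

end

theory Submission
  imports Defs
begin

lemma count_sum:
  "(\<Sum>i=1..n. if odd i then (c::real) else d) = c * real ((n+1) div 2) + d * real (n div 2)"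
proof (induction n)
  case 0 then show ?case by simp
next
  case (Suc n)
  have "(\<Sum>i=1..Suc n. if odd i then c else d) = (\<Sum>i=1..n. if odd i then c else d) + (if odd (Suc n) then c else d)"
    by simp
  also have "\<dots> = c * real ((Suc n+1) div 2) + d * real (Suc n div 2)"
  proof (cases "even n")
    case True
    then obtain k where "n = 2*k" by blast
    then show ?thesis using Suc.IH by (simp add: algebra_simps)
  next
    case False
    then obtain k where "n = 2*k+1" using oddE by blast
    then show ?thesis using Suc.IH by (simp add: algebra_simps)
  qed
  finally show ?case .
qed

lemma pairs_bound:
  fixes y :: "nat \<Rightarrow> real"
  assumes "\<forall>i. 1 \<le> i \<and> i \<le> 2*k - 1 \<longrightarrow> y i + y (i+1) \<le> 1"
  shows "(\<Sum>i=1..2*k. y i) \<le> real k"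
  using assms
proof (induction k)
  case 0 then show ?case by simp
next
  case (Suc k)
  have "\<forall>i. 1 \<le> i \<and> i \<le> 2*k - 1 \<longrightarrow> y i + y (i+1) \<le> 1" using Suc.prems by auto
  then have IH: "(\<Sum>i=1..2*k. y i) \<le> real k" using Suc.IH by blast
  have h: "y (2*k+1) + y (2*k+2) \<le> 1" using Suc.prems by (auto dest: spec[of _ "2*k+1"])
  have "(\<Sum>i=1..2*Suc k. y i) = (\<Sum>i=1..2*k. y i) + y (2*k+1) + y (2*k+2)"
    by (simp add: eval_nat_numeral)
  then show ?case using IH h by simp
qed

definition Od :: "(nat \<Rightarrow> real) \<Rightarrow> nat \<Rightarrow> real" where
  "Od y n = (\<Sum>i=1..n. if odd i then y i else 0)"
definition Ev :: "(nat \<Rightarrow> real) \<Rightarrow> nat \<Rightarrow> real" where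
  "Ev y n = (\<Sum>i=1..n. if odd i then 0 else y i)"

lemma Od_Ev: "Od y n + Ev y n = (\<Sum>i=1..n. y i)"
  unfolding Od_def Ev_def by (simp add: sum.distrib[symmetric]) (rule sum.cong, auto)

lemma odd_main:
  fixes y :: "nat \<Rightarrow> real"
  assumes "\<forall>i. 1 \<le> i \<and> i \<le> 2*k \<longrightarrow> y i + y (i+1) \<le> 1"
  shows "real k * Od y (2*k+1) + real (k+1) * Ev y (2*k+1) \<le> real k * real (k+1)"
  using assms
proof (induction k)
  case 0 then show ?case by (simp add: Ev_def)
next
  case (Suc k)
  have IH: "real k * Od y (2*k+1) + real (k+1) * Ev y (2*k+1) \<le> real k * real (k+1)"
    using Suc by auto
  have pb: "(\<Sum>i=1..2*k. y i) \<le> real k" using Suc.prems by (intro pairs_bound) auto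
  have s: "(\<Sum>i=1..2*k+1. y i) = (\<Sum>i=1..2*k. y i) + y (2*k+1)" by simp
  have h1: "y (2*k+1) + y (2*k+2) \<le> 1" using Suc.prems by (auto dest: spec[of _ "2*k+1"])
  have h2: "y (2*k+2) + y (2*k+3) \<le> 1" using Suc.prems[rule_format, of "2*k+2"] by (simp add: eval_nat_numeral)
  have eq: "2*Suc k+1 = Suc (Suc (2*k+1))" by simp
  have e3: "2*k+3 = Suc (Suc (2*k+1))" and e2: "2*k+2 = Suc (2*k+1)" by simp_all
  have O: "Od y (2*Suc k+1) = Od y (2*k+1) + y (2*k+3)"
    unfolding Od_def eq by (simp add: e3 e2)
  have E: "Ev y (2*Suc k+1) = Ev y (2*k+1) + y (2*k+2)"
    unfolding Ev_def eq by (simp add: e3 e2)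
  have OE: "Od y (2*k+1) + Ev y (2*k+1) \<le> real k + y (2*k+1)"
    using Od_Ev[of y "2*k+1"] s pb by simp
  have h2': "real (k+1) * (y (2*k+2) + y (2*k+3)) \<le> real (k+1)"
    using h2 by (simp add: mult_left_le)
  show ?case unfolding O E using IH OE h1 h2'
    by (simp add: algebra_simps)
qed


lemma key:
  fixes y :: "nat \<Rightarrow> real" and m :: nat
  assumes "\<forall>i. 1 \<le> i \<and> i \<le> m - 1 \<longrightarrow> y i + y (i+1) \<le> 1"
  shows "real (m div 2) * Od y m + real ((m+1) div 2) * Ev y m \<le> real ((m+1) div 2) * real (m div 2)"
proof (cases "even m")
  case True
  then obtain k where m: "m = 2*k" by blast
  have "(\<Sum>i=1..2*k. y i) \<le> real k" using assms m by (intro pairs_bound) auto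
  then have "real k * (\<Sum>i=1..2*k. y i) \<le> real k * real k" by (simp add: mult_left_mono)
  moreover have "(2*k+1) div 2 = k" by simp
  ultimately have "real k * (Od y m + Ev y m) \<le> real k * real k" using Od_Ev[of y m] m by simp
  then show ?thesis using m by (simp add: distrib_left)
next
  case False
  then obtain k where m: "m = 2*k+1" using oddE by blast
  have "real k * Od y (2*k+1) + real (k+1) * Ev y (2*k+1) \<le> real k * real (k+1)"
    using assms m by (intro odd_main) auto
  moreover have "(2*k+1+1) div 2 = k+1" by simp
  ultimately show ?thesis using m by (simp add: algebra_simps)
qed

lemma amgm:
  fixes x A N :: real
  assumes "A > 0" "N > 0"
  shows "x \<le> N / (2*A) * x^2 + A / (2*N)"
proof -
  have "0 \<le> (N*x - A)^2" by simp
  then have "2*A*N*x \<le> N^2*x^2 + A^2" by (simp add: power2_eq_square algebra_simps)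
  then have "2*A*N*x / (2*A*N) \<le> (N^2*x^2 + A^2) / (2*A*N)"
    using assms by (intro divide_right_mono) auto
  then show ?thesis using assms by (simp add: field_simps power2_eq_square)
qed

theorem mainTheorem11:
  fixes w :: real and m :: nat
  assumes "m \<ge> 2" and "w > 0"
  shows "extremal (\<lambda>_. w) m"
proof -
  define A where "A = real ((m+1) div 2)"
  define B where "B = real (m div 2)"
  define N where "N = sqrt (A^2 + B^2)"
  have Ap: "A > 0" unfolding A_def using assms by simp
  have Bp: "B > 0" unfolding B_def using assms by simp
  have Np: "N > 0" unfolding N_def using Ap by (simp add: add_pos_nonneg)
  have N2: "N^2 = A^2 + B^2" unfolding N_def by simp
  have cnt: "\<And>c d. (\<Sum>i=1..m. if odd i then (c::real) else d) = c * A + d * B"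
    unfolding A_def B_def by (rule count_sum)
  have bare: "L_bare (\<lambda>_. w) m = w * N"
  proof -
    have o: "(\<Sum>i\<in>{i\<in>{1..m}. odd i}. w) = w * A"
    proof -
      have "(\<Sum>i\<in>{i\<in>{1..m}. odd i}. w) = (\<Sum>i=1..m. if odd i then w else 0)"
        by (rule sum.inter_filter) simp
      also have "\<dots> = w * A + 0 * B" by (rule cnt)
      finally show ?thesis by simp
    qed
    have e: "(\<Sum>i\<in>{i\<in>{1..m}. even i}. w) = w * B"
    proof -
      have "(\<Sum>i\<in>{i\<in>{1..m}. even i}. w) = (\<Sum>i=1..m. if even i then w else 0)"
        by (rule sum.inter_filter) simp
      also have "\<dots> = (\<Sum>i=1..m. if odd i then 0 else w)" by (rule sum.cong) auto
      also have "\<dots> = 0 * A + w * B" by (rule cnt)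
      finally show ?thesis by simp
    qed
    have "sqrt ((w*A)^2 + (w*B)^2) = sqrt (w^2 * N^2)" using N2 by (simp add: algebra_simps power_mult_distrib)
    also have "\<dots> = w * N" using assms Np by (simp add: real_sqrt_mult)
    finally show ?thesis unfolding L_bare_def o e .
  qed
  define S where "S = {(\<Sum>i=1..m. w * x i) | x :: nat \<Rightarrow> real.
                   \<forall>i. 1 \<le> i \<and> i \<le> m - 1 \<longrightarrow> (x i)\<^sup>2 + (x (i+1))\<^sup>2 \<le> 1}"
  have "Sup S = w * N"
  proof (rule cSup_eq_maximum)
    define x0 where "x0 = (\<lambda>i::nat. if odd i then A / N else B / N)"
    have c0: "\<forall>i. 1 \<le> i \<and> i \<le> m - 1 \<longrightarrow> (x0 i)\<^sup>2 + (x0 (i+1))\<^sup>2 \<le> 1"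
    proof (intro allI impI)
      fix i :: nat
      have "(A/N)^2 + (B/N)^2 = 1" using N2 Np Ap by (simp add: power_divide add_divide_distrib[symmetric])
      then show "(x0 i)\<^sup>2 + (x0 (i+1))\<^sup>2 \<le> 1" unfolding x0_def by auto
    qed
    have "(\<Sum>i=1..m. w * x0 i) = (\<Sum>i=1..m. if odd i then w*A/N else w*B/N)"
      unfolding x0_def by (rule sum.cong) auto
    also have "\<dots> = w * A / N * A + w * B / N * B" by (rule cnt)
    also have "\<dots> = w * (A^2 + B^2) / N" by (simp add: add_divide_distrib algebra_simps power2_eq_square)
    also have "\<dots> = w * N"
    proof -
      have "w*(A^2+B^2) = w*N^2" by (simp add: N2)
      also have "\<dots> = (w*N)*N" by (simp add: power2_eq_square)
      finally have "w*(A^2+B^2) = (w*N)*N" .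
      then have "w*(A^2+B^2)/N = (w*N)*N/N" by (simp only:)
      then show ?thesis using Np by simp
    qed
    finally have "w * N = (\<Sum>i=1..m. w * x0 i)" by simp
    then show "w * N \<in> S" unfolding S_def using c0 by blast
  next
    fix z assume "z \<in> S"
    then obtain x where z: "z = (\<Sum>i=1..m. w * x i)"
      and c: "\<forall>i. 1 \<le> i \<and> i \<le> m - 1 \<longrightarrow> (x i)\<^sup>2 + (x (i+1))\<^sup>2 \<le> 1"
      unfolding S_def by blast
    define y where "y = (\<lambda>i. (x i)^2)"
    have k: "B * Od y m + A * Ev y m \<le> A * B"
      unfolding A_def B_def by (rule key) (use c in \<open>simp add: y_def\<close>)
    have pt: "x i \<le> (if odd i then N/(2*A) * y i else 0) + (if odd i then 0 else N/(2*B) * y i)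
           + (if odd i then A else 0)/(2*N) + (if odd i then 0 else B)/(2*N)" for i
    proof (cases "odd i")
      case True
      then show ?thesis using amgm[OF Ap Np, of "x i"] by (simp add: y_def)
    next
      case False
      then show ?thesis using amgm[OF Bp Np, of "x i"] by (simp add: y_def)
    qed
    have "(\<Sum>i=1..m. x i) \<le> (\<Sum>i=1..m. (if odd i then N/(2*A) * y i else 0) + (if odd i then 0 else N/(2*B) * y i)
           + (if odd i then A else 0)/(2*N) + (if odd i then 0 else B)/(2*N))"
      by (rule sum_mono) (rule pt)
    also have "\<dots> = (\<Sum>i=1..m. if odd i then N/(2*A) * y i else 0) + (\<Sum>i=1..m. if odd i then 0 else N/(2*B) * y i)
           + (\<Sum>i=1..m. if odd i then A else 0)/(2*N) + (\<Sum>i=1..m. if odd i then 0 else B)/(2*N)"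
      by (simp only: sum.distrib sum_divide_distrib)
    also have "(\<Sum>i=1..m. if odd i then N/(2*A) * y i else 0) = N/(2*A) * Od y m"
      unfolding Od_def sum_distrib_left by (rule sum.cong) auto
    also have "(\<Sum>i=1..m. if odd i then 0 else N/(2*B) * y i) = N/(2*B) * Ev y m"
      unfolding Ev_def sum_distrib_left by (rule sum.cong) auto
    also have "(\<Sum>i=1..m. if odd i then A else 0) = A * A + 0 * B" by (rule cnt)
    also have "(\<Sum>i=1..m. if odd i then 0 else B) = 0 * A + B * B" by (rule cnt)
    also have "N/(2*A) * Od y m + N/(2*B) * Ev y m + (A * A + 0 * B)/(2*N) + (0 * A + B * B)/(2*N)
        = N/(2*A*B) * (B * Od y m + A * Ev y m) + (A^2+B^2)/(2*N)"
      using Ap Bp Np by (simp add: field_simps power2_eq_square)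
    also have "\<dots> \<le> N/(2*A*B) * (A * B) + (A^2+B^2)/(2*N)"
      using k Ap Bp Np by (intro add_right_mono mult_left_mono) auto
    also have "\<dots> = N/2 + N^2/(2*N)" using Ap Bp N2 by simp
    also have "\<dots> = N" using Np by (simp add: power2_eq_square)
    finally have "(\<Sum>i=1..m. x i) \<le> N" .
    then have "w * (\<Sum>i=1..m. x i) \<le> w * N" using assms by simp
    then show "z \<le> w * N" unfolding z sum_distrib_left .
  qed
  then show ?thesis unfolding extremal_def L1_def bare S_def by simp
qed

end
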